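(* Let $V$ be a crossed module and $M$ an abelian $\pi_0(V)$-module. Then $H^1(V,M)\cong H^1(\pi_0(V),M)$.
   Context: A crossed module $V$: group $G_V$, group $M_V$ with left $G_V$-action ${}^gm$, homomorphism $\mu:M_V\to G_V$ with $\mu({}^gm)=g\mu(m)g^{-1}$ and ${}^{\mu(n)}m=nmn^{-1}$; $\pi_0(V)=G_V/\mu(M_V)$, $\bar g$ the class of $g$. The cochain complex of $V$ with coefficients in $M$ begins $C^0=M$, $C^1=\mathrm{Map}(G_V,M)$, $C^2=\mathrm{Map}(M_V\times G_V\times G_V,M)$ with $(dc)(g)=c-\bar g\cdot c$ and $(dc)(m,h,g)=c(\mu(m)h)-c(hg)+\bar h\cdot c(g)$; $H^1(V,M)$ is its first cohomology. $H^1(\pi_0(V),M)$ is ordinary group cohomology. *)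

theory Defs
  imports "HOL-Algebra.Algebra" "HOL-Library.FuncSet"
begin

definition crossed_module ::
  "('g, 'x) monoid_scheme \<Rightarrow> ('m, 'y) monoid_scheme \<Rightarrow> ('g \<Rightarrow> 'm \<Rightarrow> 'm) \<Rightarrow> ('m \<Rightarrow> 'g) \<Rightarrow> bool"
where
  "crossed_module G Mv act mu \<longleftrightarrow>
     group G \<and> group Mv \<and> mu \<in> hom Mv G \<and>
     (\<forall>g\<in>carrier G. act g \<in> hom Mv Mv) \<and>
     (\<forall>m\<in>carrier Mv. act \<one>\<^bsub>G\<^esub> m = m) \<and>
     (\<forall>g\<in>carrier G. \<forall>h\<in>carrier G. \<forall>m\<in>carrier Mv.
        act (g \<otimes>\<^bsub>G\<^esub> h) m = act g (act h m)) \<and>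
     (\<forall>g\<in>carrier G. \<forall>m\<in>carrier Mv.
        mu (act g m) = g \<otimes>\<^bsub>G\<^esub> mu m \<otimes>\<^bsub>G\<^esub> inv\<^bsub>G\<^esub> g) \<and>
     (\<forall>n\<in>carrier Mv. \<forall>m\<in>carrier Mv.
        act (mu n) m = n \<otimes>\<^bsub>Mv\<^esub> m \<otimes>\<^bsub>Mv\<^esub> inv\<^bsub>Mv\<^esub> n)"

definition pi0 :: "('g, 'x) monoid_scheme \<Rightarrow> ('m, 'y) monoid_scheme \<Rightarrow> ('m \<Rightarrow> 'g) \<Rightarrow> 'g set monoid"
  where "pi0 G Mv mu = G Mod (mu ` carrier Mv)"

definition cls :: "('g, 'x) monoid_scheme \<Rightarrow> ('m, 'y) monoid_scheme \<Rightarrow> ('m \<Rightarrow> 'g) \<Rightarrow> 'g \<Rightarrow> 'g set"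
  where "cls G Mv mu g = (mu ` carrier Mv) #>\<^bsub>G\<^esub> g"

text \<open>An abelian P-module: an abelian group M (written multiplicatively) with a left
  action rho of the group P by group automorphisms.\<close>
definition group_module ::
  "('p, 'x) monoid_scheme \<Rightarrow> ('a, 'y) monoid_scheme \<Rightarrow> ('p \<Rightarrow> 'a \<Rightarrow> 'a) \<Rightarrow> bool"
where
  "group_module P M rho \<longleftrightarrow>
     group P \<and> comm_group M \<and>
     (\<forall>x\<in>carrier P. rho x \<in> hom M M) \<and>
     (\<forall>a\<in>carrier M. rho \<one>\<^bsub>P\<^esub> a = a) \<and>
     (\<forall>x\<in>carrier P. \<forall>y\<in>carrier P. \<forall>a\<in>carrier M.
        rho (x \<otimes>\<^bsub>P\<^esub> y) a = rho x (rho y a))"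

definition fun_group :: "'b set \<Rightarrow> ('a, 'y) monoid_scheme \<Rightarrow> ('b \<Rightarrow> 'a) monoid"
  where "fun_group A M =
    \<lparr>carrier = A \<rightarrow>\<^sub>E carrier M,
     monoid.mult = (\<lambda>f g. \<lambda>x\<in>A. f x \<otimes>\<^bsub>M\<^esub> g x),
     one = (\<lambda>x\<in>A. \<one>\<^bsub>M\<^esub>)\<rparr>"

text \<open>Cohomology of the crossed module V with coefficients in the pi_0(V)-module M:
  1-cocycles are the c in C^1 = Map(G,M) with dc = 0 in C^2, where
  (dc)(m,h,g) = c(mu(m) h) - c(h g) + [h].c(g); 1-coboundaries are the maps
  g \<mapsto> a - [g].a for a in C^0 = M.\<close>
definition Z1_cm where
  "Z1_cm G Mv mu M rho =
    {c \<in> carrier G \<rightarrow>\<^sub>E carrier M.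
       \<forall>m\<in>carrier Mv. \<forall>h\<in>carrier G. \<forall>g\<in>carrier G.
         c (mu m \<otimes>\<^bsub>G\<^esub> h) \<otimes>\<^bsub>M\<^esub> inv\<^bsub>M\<^esub> (c (h \<otimes>\<^bsub>G\<^esub> g))
           \<otimes>\<^bsub>M\<^esub> rho (cls G Mv mu h) (c g) = \<one>\<^bsub>M\<^esub>}"

definition B1_cm where
  "B1_cm G Mv mu M rho =
    {(\<lambda>g\<in>carrier G. a \<otimes>\<^bsub>M\<^esub> inv\<^bsub>M\<^esub> (rho (cls G Mv mu g) a)) | a. a \<in> carrier M}"

definition H1_cm where
  "H1_cm G Mv mu M rho =
    ((fun_group (carrier G) M)\<lparr>carrier := Z1_cm G Mv mu M rho\<rparr>) Mod B1_cm G Mv mu M rho"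

definition Z1_grp where
  "Z1_grp P M rho =
    {f \<in> carrier P \<rightarrow>\<^sub>E carrier M.
       \<forall>x\<in>carrier P. \<forall>y\<in>carrier P.
         f (x \<otimes>\<^bsub>P\<^esub> y) = f x \<otimes>\<^bsub>M\<^esub> rho x (f y)}"

definition B1_grp where
  "B1_grp P M rho =
    {(\<lambda>x\<in>carrier P. rho x a \<otimes>\<^bsub>M\<^esub> inv\<^bsub>M\<^esub> a) | a. a \<in> carrier M}"

definition H1_grp where
  "H1_grp P M rho =
    ((fun_group (carrier P) M)\<lparr>carrier := Z1_grp P M rho\<rparr>) Mod B1_grp P M rho"

end

theory Submission
  imports Defs
begin


lemma fun_group_comm:
  assumes "comm_group M"
  shows "comm_group (fun_group A M)"
proof -
  interpret M: comm_group M by fact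
  show ?thesis
  proof (rule comm_groupI)
    fix f g assume "f \<in> carrier (fun_group A M)" "g \<in> carrier (fun_group A M)"
    thus "f \<otimes>\<^bsub>fun_group A M\<^esub> g \<in> carrier (fun_group A M)"
      by (auto simp: fun_group_def)
  next
    show "\<one>\<^bsub>fun_group A M\<^esub> \<in> carrier (fun_group A M)" by (auto simp: fun_group_def)
  next
    fix f g h assume "f \<in> carrier (fun_group A M)" "g \<in> carrier (fun_group A M)" "h \<in> carrier (fun_group A M)"
    thus "f \<otimes>\<^bsub>fun_group A M\<^esub> g \<otimes>\<^bsub>fun_group A M\<^esub> h = f \<otimes>\<^bsub>fun_group A M\<^esub> (g \<otimes>\<^bsub>fun_group A M\<^esub> h)"
      by (auto simp: fun_group_def M.m_assoc PiE_iff intro!: ext)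
  next
    fix f g assume "f \<in> carrier (fun_group A M)" "g \<in> carrier (fun_group A M)"
    thus "f \<otimes>\<^bsub>fun_group A M\<^esub> g = g \<otimes>\<^bsub>fun_group A M\<^esub> f"
      by (auto simp: fun_group_def M.m_comm PiE_iff intro!: ext)
  next
    fix f assume "f \<in> carrier (fun_group A M)"
    thus "\<one>\<^bsub>fun_group A M\<^esub> \<otimes>\<^bsub>fun_group A M\<^esub> f = f"
      by (auto simp: fun_group_def PiE_iff extensional_def intro!: ext)
  next
    fix f assume f: "f \<in> carrier (fun_group A M)"
    show "\<exists>y\<in>carrier (fun_group A M). y \<otimes>\<^bsub>fun_group A M\<^esub> f = \<one>\<^bsub>fun_group A M\<^esub>"
      by (rule bexI[of _ "\<lambda>x\<in>A. inv\<^bsub>M\<^esub> f x"]) (use f in \<open>auto simp: fun_group_def PiE_iff intro!: ext\<close>)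
  qed
qed

lemma fun_group_inv:
  assumes "comm_group M" "f \<in> carrier (fun_group A M)"
  shows "inv\<^bsub>fun_group A M\<^esub> f = (\<lambda>x\<in>A. inv\<^bsub>M\<^esub> f x)"
proof -
  interpret M: comm_group M by fact
  interpret F: comm_group "fun_group A M" by (rule fun_group_comm) fact
  show ?thesis
    by (rule F.inv_equality) (use assms(2) in \<open>auto simp: fun_group_def PiE_iff intro!: ext\<close>)
qed

lemma (in comm_group) cg1: "a \<in> carrier G \<Longrightarrow> b \<in> carrier G \<Longrightarrow> a \<otimes> inv (a \<otimes> b) \<otimes> b = \<one>"
proof -
  assume a: "a \<in> carrier G" and b: "b \<in> carrier G"
  have "a \<otimes> inv (a \<otimes> b) \<otimes> b = a \<otimes> (b \<otimes> inv (a \<otimes> b))"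
    using a b by (simp only: m_assoc m_comm[of "inv (a \<otimes> b)" b] m_closed inv_closed)
  also have "\<dots> = (a \<otimes> b) \<otimes> inv (a \<otimes> b)" using a b by (simp only: m_assoc m_closed inv_closed)
  also have "\<dots> = \<one>" using a b by simp
  finally show ?thesis .
qed

lemma (in comm_group) cg2: "x \<in> carrier G \<Longrightarrow> y \<in> carrier G \<Longrightarrow> z \<in> carrier G \<Longrightarrow>
   x \<otimes> inv y \<otimes> z = \<one> \<Longrightarrow> y = x \<otimes> z"
proof -
  assume a: "x \<in> carrier G" "y \<in> carrier G" "z \<in> carrier G" and e: "x \<otimes> inv y \<otimes> z = \<one>"
  have "x \<otimes> inv y \<otimes> z = inv y \<otimes> (x \<otimes> z)"
    using a by (simp only: m_assoc m_comm[of x "inv y"] m_closed inv_closed)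
  hence "inv y \<otimes> (x \<otimes> z) = inv y \<otimes> y" using e a by (simp only: l_inv)
  thus ?thesis using a l_cancel[of "inv y" "x \<otimes> z" y] by simp
qed

lemma (in comm_group) cg4: "u \<in> carrier G \<Longrightarrow> v \<in> carrier G \<Longrightarrow> w \<in> carrier G \<Longrightarrow>
   v \<otimes> inv w = u \<otimes> inv w \<otimes> (v \<otimes> inv u)"
proof -
  assume a: "u \<in> carrier G" "v \<in> carrier G" "w \<in> carrier G"
  have "u \<otimes> inv w \<otimes> (v \<otimes> inv u) = (v \<otimes> inv u) \<otimes> (u \<otimes> inv w)"
    using a by (simp only: m_comm[of "u \<otimes> inv w" "v \<otimes> inv u"] m_closed inv_closed)
  also have "\<dots> = v \<otimes> (inv u \<otimes> (u \<otimes> inv w))" using a by (simp only: m_assoc m_closed inv_closed)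
  also have "inv u \<otimes> (u \<otimes> inv w) = (inv u \<otimes> u) \<otimes> inv w"
    using a by (simp only: m_assoc m_closed inv_closed)
  also have "(inv u \<otimes> u) \<otimes> inv w = inv w" using a by simp
  finally show ?thesis by simp
qed

lemma (in comm_group) cg5: "a \<in> carrier G \<Longrightarrow> b \<in> carrier G \<Longrightarrow> c \<in> carrier G \<Longrightarrow> d \<in> carrier G \<Longrightarrow>
   a \<otimes> b \<otimes> (c \<otimes> d) = a \<otimes> c \<otimes> (b \<otimes> d)"
  by (simp add: m_ac)

lemma (in comm_group) cg6: "a \<in> carrier G \<Longrightarrow> b \<in> carrier G \<Longrightarrow> inv a \<otimes> inv (inv b) = b \<otimes> inv a"
  by (simp add: m_comm)

locale cmsetup =
  fixes G :: "('g, 'x) monoid_scheme" and Mv :: "('m, 'y) monoid_scheme"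
    and act :: "'g \<Rightarrow> 'm \<Rightarrow> 'm" and mu :: "'m \<Rightarrow> 'g"
    and M :: "('a, 'z) monoid_scheme" and rho :: "'g set \<Rightarrow> 'a \<Rightarrow> 'a"
  assumes CM: "crossed_module G Mv act mu"
    and GM: "group_module (pi0 G Mv mu) M rho"
begin

abbreviation "N \<equiv> mu ` carrier Mv"
abbreviation "P \<equiv> pi0 G Mv mu"

lemma G: "group G" and Mvg: "group Mv" and muh: "mu \<in> hom Mv G"
  using CM by (auto simp: crossed_module_def)

lemma MC: "comm_group M" and Pg: "group P" and rhoh: "\<And>x. x \<in> carrier P \<Longrightarrow> rho x \<in> hom M M"
  and rho1: "\<And>a. a \<in> carrier M \<Longrightarrow> rho \<one>\<^bsub>P\<^esub> a = a"
  using GM by (auto simp: group_module_def)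

lemma N_normal: "N \<lhd> G"
proof -
  interpret G: group G by (rule G)
  interpret h: group_hom Mv G mu using Mvg G muh by (simp add: group_hom_def group_hom_axioms_def)
  show ?thesis
    unfolding G.normal_inv_iff
  proof (intro conjI ballI)
    show "subgroup N G" by (rule h.img_is_subgroup)
    fix x h assume x: "x \<in> carrier G" and h: "h \<in> N"
    then obtain m where m: "m \<in> carrier Mv" "h = mu m" by auto
    have "act x \<in> hom Mv Mv" using CM x by (auto simp: crossed_module_def)
    hence "act x m \<in> carrier Mv" using m by (auto simp: hom_def)
    moreover have "mu (act x m) = x \<otimes>\<^bsub>G\<^esub> h \<otimes>\<^bsub>G\<^esub> inv\<^bsub>G\<^esub> x"
      using CM x m by (auto simp: crossed_module_def)
    ultimately show "x \<otimes>\<^bsub>G\<^esub> h \<otimes>\<^bsub>G\<^esub> inv\<^bsub>G\<^esub> x \<in> N" by (metis imageI)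
  qed
qed

lemma cls_carrier: "g \<in> carrier G \<Longrightarrow> cls G Mv mu g \<in> carrier P"
  by (auto simp: cls_def pi0_def carrier_FactGroup)

lemma carrier_P: "carrier P = cls G Mv mu ` carrier G"
  by (auto simp: cls_def pi0_def carrier_FactGroup)

lemma cls_mult: "g \<in> carrier G \<Longrightarrow> h \<in> carrier G \<Longrightarrow>
   cls G Mv mu (g \<otimes>\<^bsub>G\<^esub> h) = cls G Mv mu g \<otimes>\<^bsub>P\<^esub> cls G Mv mu h"
  using normal.rcos_sum[OF N_normal] by (simp add: cls_def pi0_def)

lemma cls_one: "cls G Mv mu \<one>\<^bsub>G\<^esub> = \<one>\<^bsub>P\<^esub>"
proof -
  interpret G: group G by (rule G)
  show ?thesis using normal_imp_subgroup[OF N_normal]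
    by (simp add: cls_def pi0_def G.coset_join2 subgroup.one_closed)
qed

lemma cls_mu: "m \<in> carrier Mv \<Longrightarrow> h \<in> carrier G \<Longrightarrow> cls G Mv mu (mu m \<otimes>\<^bsub>G\<^esub> h) = cls G Mv mu h"
proof -
  interpret G: group G by (rule G)
  assume m: "m \<in> carrier Mv" and h: "h \<in> carrier G"
  have sg: "subgroup N G" using normal_imp_subgroup[OF N_normal] .
  have mc: "mu m \<in> carrier G" using muh m by (auto simp: hom_def)
  have "N #>\<^bsub>G\<^esub> (mu m \<otimes>\<^bsub>G\<^esub> h) = (N #>\<^bsub>G\<^esub> mu m) #>\<^bsub>G\<^esub> h"
    using G.coset_mult_assoc[of N "mu m" h] sg mc h by (simp add: subgroup.subset)
  also have "N #>\<^bsub>G\<^esub> mu m = N" using subgroup.rcos_const[OF sg G] m by auto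
  finally show ?thesis by (simp add: cls_def)
qed

lemma cls_eqE: "g \<in> carrier G \<Longrightarrow> g' \<in> carrier G \<Longrightarrow> cls G Mv mu g' = cls G Mv mu g \<Longrightarrow>
   \<exists>m\<in>carrier Mv. g' = mu m \<otimes>\<^bsub>G\<^esub> g"
proof -
  interpret G: group G by (rule G)
  assume a: "g \<in> carrier G" "g' \<in> carrier G" "cls G Mv mu g' = cls G Mv mu g"
  have sg: "subgroup N G" using normal_imp_subgroup[OF N_normal] .
  have "g' \<in> N #>\<^bsub>G\<^esub> g" using G.repr_independenceD[OF sg a(2)] a(3) by (simp add: cls_def)
  thus ?thesis by (auto simp: r_coset_def)
qed


lemma Mg: "group M" using MC comm_group.axioms(2) by blast

lemma rho_gh: "x \<in> carrier P \<Longrightarrow> group_hom M M (rho x)"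
  using rhoh Mg by (simp add: group_hom_def group_hom_axioms_def)

lemma rho_mult: "x \<in> carrier P \<Longrightarrow> a \<in> carrier M \<Longrightarrow> b \<in> carrier M \<Longrightarrow>
   rho x (a \<otimes>\<^bsub>M\<^esub> b) = rho x a \<otimes>\<^bsub>M\<^esub> rho x b"
  by (rule group_hom.hom_mult[OF rho_gh])
lemma rho_inv: "x \<in> carrier P \<Longrightarrow> a \<in> carrier M \<Longrightarrow> rho x (inv\<^bsub>M\<^esub> a) = inv\<^bsub>M\<^esub> rho x a"
  by (rule group_hom.hom_inv[OF rho_gh])
lemma rho_one: "x \<in> carrier P \<Longrightarrow> rho x \<one>\<^bsub>M\<^esub> = \<one>\<^bsub>M\<^esub>"
  by (rule group_hom.hom_one[OF rho_gh])
lemma rho_closed: "x \<in> carrier P \<Longrightarrow> a \<in> carrier M \<Longrightarrow> rho x a \<in> carrier M"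
  by (rule hom_in_carrier[OF rhoh])
lemma rho_comp: "x \<in> carrier P \<Longrightarrow> y \<in> carrier P \<Longrightarrow> a \<in> carrier M \<Longrightarrow>
   rho (x \<otimes>\<^bsub>P\<^esub> y) a = rho x (rho y a)"
  using GM by (auto simp: group_module_def)

lemmas cg1 = comm_group.cg1[OF MC]
lemmas cg2 = comm_group.cg2[OF MC]
lemmas cg4 = comm_group.cg4[OF MC]
lemmas cg5 = comm_group.cg5[OF MC]
lemmas cg6 = comm_group.cg6[OF MC]
end


context cmsetup begin

lemma Mm: "a \<in> carrier M \<Longrightarrow> b \<in> carrier M \<Longrightarrow> a \<otimes>\<^bsub>M\<^esub> b \<in> carrier M"
  using Mg by (simp add: group.is_monoid monoid.m_closed)
lemma Mi: "a \<in> carrier M \<Longrightarrow> inv\<^bsub>M\<^esub> a \<in> carrier M"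
  using Mg by (simp add: group.inv_closed)
lemma M1: "\<one>\<^bsub>M\<^esub> \<in> carrier M"
  using Mg by (simp add: group.is_monoid monoid.one_closed)

definition psi :: "('g set \<Rightarrow> 'a) \<Rightarrow> 'g \<Rightarrow> 'a" where
  "psi f = (\<lambda>g\<in>carrier G. f (cls G Mv mu g))"

abbreviation "FP \<equiv> fun_group (carrier P) M"
abbreviation "FG \<equiv> fun_group (carrier G) M"

lemma psi_hom: "psi \<in> hom FP FG"
  by (auto simp: hom_def psi_def fun_group_def PiE_iff cls_carrier intro!: ext)

lemma Z1_grp_sub: "subgroup (Z1_grp P M rho) FP"
proof -
  interpret F: comm_group FP by (rule fun_group_comm[OF MC])
  interpret M: comm_group M by (rule MC)
  interpret P: group P by (rule Pg)
  show ?thesis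
  proof (rule F.subgroupI)
    show "Z1_grp P M rho \<subseteq> carrier FP" by (auto simp: Z1_grp_def fun_group_def)
    show "Z1_grp P M rho \<noteq> {}"
    proof -
      have "(\<lambda>x\<in>carrier P. \<one>\<^bsub>M\<^esub>) \<in> Z1_grp P M rho"
        by (auto simp: Z1_grp_def rho_one)
      thus ?thesis by blast
    qed
  next
    fix f assume f: "f \<in> Z1_grp P M rho"
    hence fc: "f \<in> carrier FP" by (auto simp: Z1_grp_def fun_group_def)
    show "inv\<^bsub>FP\<^esub> f \<in> Z1_grp P M rho"
      unfolding fun_group_inv[OF MC fc] using f
      by (auto simp: Z1_grp_def PiE_iff rho_inv M.inv_mult rho_closed)
  next
    fix f g assume f: "f \<in> Z1_grp P M rho" and g: "g \<in> Z1_grp P M rho"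
    show "f \<otimes>\<^bsub>FP\<^esub> g \<in> Z1_grp P M rho"
      using f g by (auto simp: Z1_grp_def fun_group_def PiE_iff rho_mult rho_closed cg5)
  qed
qed

lemma B1_grp_sub: "subgroup (B1_grp P M rho) FP"
proof -
  interpret F: comm_group FP by (rule fun_group_comm[OF MC])
  interpret M: comm_group M by (rule MC)
  interpret P: group P by (rule Pg)
  show ?thesis
  proof (rule F.subgroupI)
    show "B1_grp P M rho \<subseteq> carrier FP" by (auto simp: B1_grp_def fun_group_def rho_closed)
    show "B1_grp P M rho \<noteq> {}" by (auto simp: B1_grp_def)
  next
    fix f assume f: "f \<in> B1_grp P M rho"
    then obtain a where a: "a \<in> carrier M" "f = (\<lambda>x\<in>carrier P. rho x a \<otimes>\<^bsub>M\<^esub> inv\<^bsub>M\<^esub> a)"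
      by (auto simp: B1_grp_def)
    hence fc: "f \<in> carrier FP" by (auto simp: fun_group_def rho_closed)
    show "inv\<^bsub>FP\<^esub> f \<in> B1_grp P M rho"
      unfolding fun_group_inv[OF MC fc] B1_grp_def
      by (rule CollectI, rule exI[of _ "inv\<^bsub>M\<^esub> a"])
        (use a in \<open>auto simp: rho_inv M.inv_mult rho_closed intro!: ext\<close>)
  next
    fix f g assume f: "f \<in> B1_grp P M rho" and g: "g \<in> B1_grp P M rho"
    then obtain a b where a: "a \<in> carrier M" "f = (\<lambda>x\<in>carrier P. rho x a \<otimes>\<^bsub>M\<^esub> inv\<^bsub>M\<^esub> a)"
      and b: "b \<in> carrier M" "g = (\<lambda>x\<in>carrier P. rho x b \<otimes>\<^bsub>M\<^esub> inv\<^bsub>M\<^esub> b)"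
      by (auto simp: B1_grp_def)
    show "f \<otimes>\<^bsub>FP\<^esub> g \<in> B1_grp P M rho"
      unfolding B1_grp_def
      by (rule CollectI, rule exI[of _ "a \<otimes>\<^bsub>M\<^esub> b"])
        (use a b in \<open>auto simp: fun_group_def rho_mult M.inv_mult rho_closed cg5 intro!: ext\<close>)
  qed
qed

lemma B1_in_Z1: "B1_grp P M rho \<subseteq> Z1_grp P M rho"
proof
  interpret P: group P by (rule Pg)
  fix f assume "f \<in> B1_grp P M rho"
  then obtain a where a: "a \<in> carrier M" "f = (\<lambda>x\<in>carrier P. rho x a \<otimes>\<^bsub>M\<^esub> inv\<^bsub>M\<^esub> a)"
    by (auto simp: B1_grp_def)
  show "f \<in> Z1_grp P M rho"
    using a Mg
    by (auto simp: Z1_grp_def rho_closed rho_comp rho_mult rho_inv Mm Mi intro!: cg4)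
qed

lemma mu_closed: "m \<in> carrier Mv \<Longrightarrow> mu m \<in> carrier G"
  using muh by (simp add: hom_in_carrier)

lemma psi_Z1: assumes f: "f \<in> Z1_grp P M rho" shows "psi f \<in> Z1_cm G Mv mu M rho"
proof -
  interpret G: group G by (rule G)
  have fP: "f \<in> carrier P \<rightarrow>\<^sub>E carrier M" and fc: "\<And>x y. x \<in> carrier P \<Longrightarrow> y \<in> carrier P \<Longrightarrow>
      f (x \<otimes>\<^bsub>P\<^esub> y) = f x \<otimes>\<^bsub>M\<^esub> rho x (f y)"
    using f by (auto simp: Z1_grp_def)
  have fM: "\<And>x. x \<in> carrier P \<Longrightarrow> f x \<in> carrier M" using fP by auto
  show ?thesis unfolding Z1_cm_def
  proof (intro CollectI conjI ballI)
    show "psi f \<in> carrier G \<rightarrow>\<^sub>E carrier M" using fM by (auto simp: psi_def cls_carrier)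
    fix m h g assume m: "m \<in> carrier Mv" and h: "h \<in> carrier G" and g: "g \<in> carrier G"
    have e1: "psi f (mu m \<otimes>\<^bsub>G\<^esub> h) = f (cls G Mv mu h)"
      using m h by (simp add: psi_def mu_closed cls_mu)
    have e2: "psi f (h \<otimes>\<^bsub>G\<^esub> g) = f (cls G Mv mu h) \<otimes>\<^bsub>M\<^esub> rho (cls G Mv mu h) (f (cls G Mv mu g))"
      using h g by (simp add: psi_def cls_mult fc cls_carrier)
    have e3: "psi f g = f (cls G Mv mu g)" using g by (simp add: psi_def)
    show "psi f (mu m \<otimes>\<^bsub>G\<^esub> h) \<otimes>\<^bsub>M\<^esub> inv\<^bsub>M\<^esub> psi f (h \<otimes>\<^bsub>G\<^esub> g) \<otimes>\<^bsub>M\<^esub>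
        rho (cls G Mv mu h) (psi f g) = \<one>\<^bsub>M\<^esub>"
      unfolding e1 e2 e3 using h g by (intro cg1 fM rho_closed cls_carrier)
  qed
qed

lemma Z1_cm_props:
  assumes c: "c \<in> Z1_cm G Mv mu M rho"
  shows "c \<one>\<^bsub>G\<^esub> = \<one>\<^bsub>M\<^esub>"
    and "\<And>h g. h \<in> carrier G \<Longrightarrow> g \<in> carrier G \<Longrightarrow>
          c (h \<otimes>\<^bsub>G\<^esub> g) = c h \<otimes>\<^bsub>M\<^esub> rho (cls G Mv mu h) (c g)"
    and "\<And>m h. m \<in> carrier Mv \<Longrightarrow> h \<in> carrier G \<Longrightarrow> c (mu m \<otimes>\<^bsub>G\<^esub> h) = c h"
proof -
  interpret G: group G by (rule G)
  interpret Mv: group Mv by (rule Mvg)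
  interpret M: comm_group M by (rule MC)
  have cE: "c \<in> carrier G \<rightarrow>\<^sub>E carrier M" and
    cc: "\<And>m h g. m \<in> carrier Mv \<Longrightarrow> h \<in> carrier G \<Longrightarrow> g \<in> carrier G \<Longrightarrow>
         c (mu m \<otimes>\<^bsub>G\<^esub> h) \<otimes>\<^bsub>M\<^esub> inv\<^bsub>M\<^esub> (c (h \<otimes>\<^bsub>G\<^esub> g))
           \<otimes>\<^bsub>M\<^esub> rho (cls G Mv mu h) (c g) = \<one>\<^bsub>M\<^esub>"
    using c by (auto simp: Z1_cm_def)
  have cM: "\<And>g. g \<in> carrier G \<Longrightarrow> c g \<in> carrier M" using cE by auto
  have mu1: "mu \<one>\<^bsub>Mv\<^esub> = \<one>\<^bsub>G\<^esub>"
    using muh Mvg G by (rule hom_one)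
  have base: "\<And>h g. h \<in> carrier G \<Longrightarrow> g \<in> carrier G \<Longrightarrow>
      c h \<otimes>\<^bsub>M\<^esub> inv\<^bsub>M\<^esub> (c (h \<otimes>\<^bsub>G\<^esub> g)) \<otimes>\<^bsub>M\<^esub> rho (cls G Mv mu h) (c g) = \<one>\<^bsub>M\<^esub>"
    using cc[OF Mv.one_closed] by (simp add: mu1)
  have "c \<one>\<^bsub>G\<^esub> \<otimes>\<^bsub>M\<^esub> inv\<^bsub>M\<^esub> (c \<one>\<^bsub>G\<^esub>) \<otimes>\<^bsub>M\<^esub> c \<one>\<^bsub>G\<^esub> = \<one>\<^bsub>M\<^esub>"
    using base[OF G.one_closed G.one_closed] by (simp add: cls_one rho1 cM)
  thus c1: "c \<one>\<^bsub>G\<^esub> = \<one>\<^bsub>M\<^esub>" using cM[OF G.one_closed] by simp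
  show "\<And>h g. h \<in> carrier G \<Longrightarrow> g \<in> carrier G \<Longrightarrow>
          c (h \<otimes>\<^bsub>G\<^esub> g) = c h \<otimes>\<^bsub>M\<^esub> rho (cls G Mv mu h) (c g)"
    by (rule cg2[OF _ _ _ base]) (auto intro: cM rho_closed cls_carrier)
  fix m h assume m: "m \<in> carrier Mv" and h: "h \<in> carrier G"
  have "c h = c (mu m \<otimes>\<^bsub>G\<^esub> h) \<otimes>\<^bsub>M\<^esub> \<one>\<^bsub>M\<^esub>"
    by (rule cg2) (use cc[OF m h G.one_closed] m h in \<open>auto simp: c1 rho_one cls_carrier intro: cM mu_closed\<close>)
  thus "c (mu m \<otimes>\<^bsub>G\<^esub> h) = c h" using m h cM mu_closed by simp
qed

lemma c_cls_const:
  assumes c: "c \<in> Z1_cm G Mv mu M rho" and g: "g \<in> carrier G" and g': "g' \<in> carrier G"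
    and e: "cls G Mv mu g' = cls G Mv mu g"
  shows "c g' = c g"
proof -
  obtain m where m: "m \<in> carrier Mv" "g' = mu m \<otimes>\<^bsub>G\<^esub> g" using cls_eqE[OF g g' e] by blast
  show ?thesis using Z1_cm_props(3)[OF c m(1) g] m(2) by simp
qed

lemma Z1_cm_img: "Z1_cm G Mv mu M rho = psi ` Z1_grp P M rho"
proof
  show "psi ` Z1_grp P M rho \<subseteq> Z1_cm G Mv mu M rho" using psi_Z1 by blast
  show "Z1_cm G Mv mu M rho \<subseteq> psi ` Z1_grp P M rho"
  proof
    interpret G: group G by (rule G)
    interpret P: group P by (rule Pg)
    fix c assume c: "c \<in> Z1_cm G Mv mu M rho"
    have cE: "c \<in> carrier G \<rightarrow>\<^sub>E carrier M" using c by (auto simp: Z1_cm_def)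
    define r where "r U = (SOME g. g \<in> carrier G \<and> cls G Mv mu g = U)" for U
    define f where "f = (\<lambda>U\<in>carrier P. c (r U))"
    have r: "\<And>U. U \<in> carrier P \<Longrightarrow> r U \<in> carrier G \<and> cls G Mv mu (r U) = U"
      unfolding r_def by (rule someI_ex) (auto simp: carrier_P)
    have fcls: "\<And>g. g \<in> carrier G \<Longrightarrow> f (cls G Mv mu g) = c g"
    proof -
      fix g assume g: "g \<in> carrier G"
      have "r (cls G Mv mu g) \<in> carrier G" "cls G Mv mu (r (cls G Mv mu g)) = cls G Mv mu g"
        using r[OF cls_carrier[OF g]] by auto
      thus "f (cls G Mv mu g) = c g"
        unfolding f_def using c_cls_const[OF c g] cls_carrier[OF g] by simp
    qed
    have "f \<in> Z1_grp P M rho"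
      unfolding Z1_grp_def
    proof (intro CollectI conjI ballI)
      show "f \<in> carrier P \<rightarrow>\<^sub>E carrier M" using r cE by (auto simp: f_def)
      fix U V assume U: "U \<in> carrier P" and V: "V \<in> carrier P"
      obtain h g where h: "h \<in> carrier G" "U = cls G Mv mu h" and g: "g \<in> carrier G" "V = cls G Mv mu g"
        using U V by (auto simp: carrier_P)
      show "f (U \<otimes>\<^bsub>P\<^esub> V) = f U \<otimes>\<^bsub>M\<^esub> rho U (f V)"
        using h g by (simp add: cls_mult[symmetric] fcls Z1_cm_props(2)[OF c])
    qed
    moreover have "psi f = c"
    proof
      fix g show "psi f g = c g"
        using cE fcls by (cases "g \<in> carrier G") (auto simp: psi_def)
    qed
    ultimately show "c \<in> psi ` Z1_grp P M rho" by blast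
  qed
qed

lemma psi_inj: "inj_on psi (carrier P \<rightarrow>\<^sub>E carrier M)"
proof (rule inj_onI)
  fix f1 f2 assume f1: "f1 \<in> carrier P \<rightarrow>\<^sub>E carrier M" and f2: "f2 \<in> carrier P \<rightarrow>\<^sub>E carrier M"
    and e: "psi f1 = psi f2"
  show "f1 = f2"
  proof
    fix U show "f1 U = f2 U"
    proof (cases "U \<in> carrier P")
      case True
      then obtain g where g: "g \<in> carrier G" "U = cls G Mv mu g" by (auto simp: carrier_P)
      have "psi f1 g = psi f2 g" using e by simp
      thus ?thesis using g by (simp add: psi_def)
    qed (use f1 f2 in \<open>auto simp: PiE_def extensional_def\<close>)
  qed
qed

lemma B1_cm_img: "B1_cm G Mv mu M rho = psi ` B1_grp P M rho"
proof -
  interpret M: comm_group M by (rule MC)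
  have key: "\<And>a. a \<in> carrier M \<Longrightarrow>
     psi (\<lambda>x\<in>carrier P. rho x (inv\<^bsub>M\<^esub> a) \<otimes>\<^bsub>M\<^esub> inv\<^bsub>M\<^esub> (inv\<^bsub>M\<^esub> a))
      = (\<lambda>g\<in>carrier G. a \<otimes>\<^bsub>M\<^esub> inv\<^bsub>M\<^esub> (rho (cls G Mv mu g) a))"
    by (auto simp: psi_def cls_carrier rho_inv rho_closed M.m_comm intro!: ext)
  show ?thesis
  proof
    show "B1_cm G Mv mu M rho \<subseteq> psi ` B1_grp P M rho"
    proof
      fix c assume "c \<in> B1_cm G Mv mu M rho"
      then obtain a where a: "a \<in> carrier M" "c = (\<lambda>g\<in>carrier G. a \<otimes>\<^bsub>M\<^esub> inv\<^bsub>M\<^esub> (rho (cls G Mv mu g) a))"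
        by (auto simp: B1_cm_def)
      have "(\<lambda>x\<in>carrier P. rho x (inv\<^bsub>M\<^esub> a) \<otimes>\<^bsub>M\<^esub> inv\<^bsub>M\<^esub> (inv\<^bsub>M\<^esub> a)) \<in> B1_grp P M rho"
        unfolding B1_grp_def by (rule CollectI, rule exI[of _ "inv\<^bsub>M\<^esub> a"]) (use a in simp)
      thus "c \<in> psi ` B1_grp P M rho" using key[OF a(1)] a(2) by (metis image_eqI)
    qed
    show "psi ` B1_grp P M rho \<subseteq> B1_cm G Mv mu M rho"
    proof
      fix c assume "c \<in> psi ` B1_grp P M rho"
      then obtain b where b: "b \<in> carrier M" "c = psi (\<lambda>x\<in>carrier P. rho x b \<otimes>\<^bsub>M\<^esub> inv\<^bsub>M\<^esub> b)"
        by (auto simp: B1_grp_def)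
      have "c = (\<lambda>g\<in>carrier G. inv\<^bsub>M\<^esub> b \<otimes>\<^bsub>M\<^esub> inv\<^bsub>M\<^esub> (rho (cls G Mv mu g) (inv\<^bsub>M\<^esub> b)))"
        using key[of "inv\<^bsub>M\<^esub> b"] b by simp
      thus "c \<in> B1_cm G Mv mu M rho" using b(1) by (auto simp: B1_cm_def)
    qed
  qed
qed

abbreviation "Zg \<equiv> FP\<lparr>carrier := Z1_grp P M rho\<rparr>"
abbreviation "Zc \<equiv> FG\<lparr>carrier := Z1_cm G Mv mu M rho\<rparr>"

lemma main: "H1_cm G Mv mu M rho \<cong> H1_grp P M rho"
proof -
  interpret FP: comm_group FP by (rule fun_group_comm[OF MC])
  interpret FG: comm_group FG by (rule fun_group_comm[OF MC])
  interpret ps: group_hom FP FG psi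
    using psi_hom by (simp add: group_hom_def group_hom_axioms_def FP.is_group FG.is_group)
  have Zg_grp: "group Zg" by (rule FP.subgroup_imp_group[OF Z1_grp_sub])
  have Zg_comm: "comm_group Zg"
    by (rule group.group_comm_groupI[OF Zg_grp])
       (use Z1_grp_sub in \<open>auto simp: FP.m_comm subgroup.mem_carrier\<close>)
  have Zc_sub: "subgroup (Z1_cm G Mv mu M rho) FG"
    unfolding Z1_cm_img by (rule ps.subgroup_img_is_subgroup[OF Z1_grp_sub])
  have Zc_grp: "group Zc" by (rule FG.subgroup_imp_group[OF Zc_sub])
  have Zc_comm: "comm_group Zc"
    by (rule group.group_comm_groupI[OF Zc_grp])
       (use Zc_sub in \<open>auto simp: FG.m_comm subgroup.mem_carrier\<close>)
  have B1c_sub: "subgroup (B1_cm G Mv mu M rho) FG"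
    unfolding B1_cm_img by (rule ps.subgroup_img_is_subgroup[OF B1_grp_sub])
  have B1c_in: "B1_cm G Mv mu M rho \<subseteq> Z1_cm G Mv mu M rho"
    unfolding B1_cm_img Z1_cm_img using B1_in_Z1 by blast
  have B1c_subZ: "subgroup (B1_cm G Mv mu M rho) Zc"
    by (rule FG.subgroup_incl[OF B1c_sub Zc_sub B1c_in])
  have B1c_norm: "B1_cm G Mv mu M rho \<lhd> Zc"
    by (rule comm_group.subgroup_imp_normal[OF Zc_comm B1c_subZ])
  have B1g_subZ: "subgroup (B1_grp P M rho) Zg"
    by (rule FP.subgroup_incl[OF B1_grp_sub Z1_grp_sub B1_in_Z1])
  have B1g_norm: "B1_grp P M rho \<lhd> Zg"
    by (rule comm_group.subgroup_imp_normal[OF Zg_comm B1g_subZ])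
  define q where "q = (\<lambda>c. B1_cm G Mv mu M rho #>\<^bsub>Zc\<^esub> c)"
  have q_hom: "q \<in> hom Zc (Zc Mod B1_cm G Mv mu M rho)"
    unfolding q_def by (rule normal.r_coset_hom_Mod[OF B1c_norm])
  have psi_hom': "psi \<in> hom Zg Zc"
    using Z1_cm_img by (auto simp: hom_def intro!: ps.hom_mult subgroup.mem_carrier[OF Z1_grp_sub])
  have Phi_hom: "q \<circ> psi \<in> hom Zg (Zc Mod B1_cm G Mv mu M rho)"
    by (rule hom_compose[OF psi_hom' q_hom])
  interpret Phi: group_hom Zg "Zc Mod B1_cm G Mv mu M rho" "q \<circ> psi"
    using Phi_hom Zg_grp normal.factorgroup_is_group[OF B1c_norm]
    by (simp add: group_hom_def group_hom_axioms_def)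
  have surj: "(q \<circ> psi) ` carrier Zg = carrier (Zc Mod B1_cm G Mv mu M rho)"
    unfolding carrier_FactGroup q_def by (simp add: Z1_cm_img image_comp)
  have ker: "kernel Zg (Zc Mod B1_cm G Mv mu M rho) (q \<circ> psi) = B1_grp P M rho"
  proof -
    have "\<And>f. f \<in> Z1_grp P M rho \<Longrightarrow> q (psi f) = B1_cm G Mv mu M rho \<longleftrightarrow> f \<in> B1_grp P M rho"
    proof -
      fix f assume f: "f \<in> Z1_grp P M rho"
      have pc: "psi f \<in> carrier Zc" using f Z1_cm_img by simp
      have "q (psi f) = B1_cm G Mv mu M rho \<longleftrightarrow> psi f \<in> B1_cm G Mv mu M rho"
      proof
        assume "q (psi f) = B1_cm G Mv mu M rho"
        thus "psi f \<in> B1_cm G Mv mu M rho"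
          using group.rcos_self[OF Zc_grp pc B1c_subZ] by (simp add: q_def)
      next
        assume "psi f \<in> B1_cm G Mv mu M rho"
        thus "q (psi f) = B1_cm G Mv mu M rho"
          unfolding q_def by (rule subgroup.rcos_const[OF B1c_subZ Zc_grp])
      qed
      also have "\<dots> \<longleftrightarrow> f \<in> B1_grp P M rho"
      proof
        assume "psi f \<in> B1_cm G Mv mu M rho"
        then obtain b where b: "b \<in> B1_grp P M rho" "psi f = psi b" unfolding B1_cm_img by auto
        have "f \<in> carrier P \<rightarrow>\<^sub>E carrier M" using f by (simp add: Z1_grp_def)
        moreover have "b \<in> carrier P \<rightarrow>\<^sub>E carrier M" using b(1) B1_in_Z1 by (auto simp: Z1_grp_def)
        ultimately have "f = b" using psi_inj b(2) by (auto dest: inj_onD)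
        thus "f \<in> B1_grp P M rho" using b by simp
      next
        assume "f \<in> B1_grp P M rho"
        thus "psi f \<in> B1_cm G Mv mu M rho" unfolding B1_cm_img by blast
      qed
      finally show "q (psi f) = B1_cm G Mv mu M rho \<longleftrightarrow> f \<in> B1_grp P M rho" .
    qed
    thus ?thesis using B1_in_Z1 by (auto simp: kernel_def)
  qed
  have "Zg Mod B1_grp P M rho \<cong> Zc Mod B1_cm G Mv mu M rho"
    using Phi.FactGroup_iso[OF surj] ker by simp
  hence "H1_grp P M rho \<cong> H1_cm G Mv mu M rho"
    by (simp add: H1_grp_def H1_cm_def)
  thus ?thesis
    by (rule group.iso_sym[OF normal.factorgroup_is_group[OF B1g_norm, folded H1_grp_def]])
qed

end

theorem corollary3p7:
  fixes G :: "('g, 'x) monoid_scheme" and Mv :: "('m, 'y) monoid_scheme"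
    and act :: "'g \<Rightarrow> 'm \<Rightarrow> 'm" and mu :: "'m \<Rightarrow> 'g"
    and M :: "('a, 'z) monoid_scheme" and rho :: "'g set \<Rightarrow> 'a \<Rightarrow> 'a"
  assumes "crossed_module G Mv act mu"
    and "group_module (pi0 G Mv mu) M rho"
  shows "H1_cm G Mv mu M rho \<cong> H1_grp (pi0 G Mv mu) M rho"
  using cmsetup.main[OF cmsetup.intro[OF assms]] .

end
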